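(* Let $X$ be a continuous real-valued random variable with compact support, and fix an integer $k \ge 1$. For each $n > k$, let $Z = Z_n$ be the random variable produced by the SMOTE-$k$ procedure (described in the context) from an i.i.d. sample $X_1, \dots, X_n$ drawn from $X$. Then $Z$ converges to $X$ in mean as $n \to \infty$.
   Context: SMOTE-$k$ procedure: given a sample $X_1,\dots,X_n$ of real numbers and a neighbor rank $1 \le k \le n-1$: (1) choose an index $i$ uniformly at random from $\{1,\dots,n\}$; (2) let $X_{i,(k)}$ be the $k$-th nearest neighbor of $X_i$ among the other sample points $\{X_j : j \neq i\}$, i.e. the point realizing the $k$-th smallest of the distances $|X_j - X_i|$, $j \ne i$; (3) draw $\lambda \sim U(0,1)$ independently; (4) output $Z = X_i + \lambda (X_{i,(k)} - X_i)$. The random variable $X$ appearing in the conclusion is taken to be the sample point $X_i$ from which $Z$ is generated (which has the distribution of $X$), so convergence in mean means $E[|Z - X_i|] \to 0$. *)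

theory Defs
  imports "HOL-Probability.Probability"
begin

text \<open>Ties in distance are broken
  by the (stable) sort, i.e. by smaller index; ties have probability zero for an
  atomless distribution anyway.\<close>
definition knn_index :: "(nat \<Rightarrow> real) \<Rightarrow> nat \<Rightarrow> nat \<Rightarrow> nat \<Rightarrow> nat" where
  "knn_index x n k i =
     sort_key (\<lambda>j. \<bar>x j - x i\<bar>) (filter (\<lambda>j. j \<noteq> i) [0..<n]) ! (k - 1)"

definition smote_Z :: "(nat \<Rightarrow> real) \<Rightarrow> nat \<Rightarrow> nat \<Rightarrow> nat \<Rightarrow> real \<Rightarrow> real" where
  "smote_Z x n k i l = x i + l * (x (knn_index x n k i) - x i)"

definition smote_space :: "real measure \<Rightarrow> nat \<Rightarrow> ((nat \<Rightarrow> real) \<times> nat \<times> real) measure" where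
  "smote_space P n =
     PiM {..<n} (\<lambda>_. P) \<Otimes>\<^sub>M
       (measure_pmf (pmf_of_set {..<n}) \<Otimes>\<^sub>M uniform_measure lborel {0..1::real})"

end

theory Submission
  imports Defs
begin


lemma knn_le:
  assumes k: "k \<ge> 1" and S: "S \<subseteq> {..<n} - {i}" and c: "k \<le> card S"
    and w: "\<forall>j\<in>S. \<bar>x j - x i\<bar> \<le> w"
  shows "\<bar>x (knn_index x n k i) - x i\<bar> \<le> w"
proof (rule ccontr)
  assume neg: "\<not> ?thesis"
  define f where "f = (\<lambda>j. \<bar>x j - x i\<bar>)"
  define L where "L = sort_key f (filter (\<lambda>j. j \<noteq> i) [0..<n])"
  have setL: "set L = {..<n} - {i}" unfolding L_def by auto
  have dL: "distinct L" unfolding L_def by (simp add: distinct_sort)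
  have sL: "sorted (map f L)" unfolding L_def by (simp add: sorted_sort_key)
  have fS: "finite S" using S finite_subset by blast
  have "card S \<le> card (set L)" using S setL by (intro card_mono) auto
  hence lenL: "k \<le> length L" using c dL by (simp add: distinct_card)
  have kn: "knn_index x n k i = L ! (k - 1)" unfolding knn_index_def L_def f_def by simp
  have big: "f (L ! (k-1)) > w" using neg kn f_def by simp
  have "S \<subseteq> (\<lambda>p. L ! p) ` {..<k-1}"
  proof
    fix s assume sS: "s \<in> S"
    then have "s \<in> set L" using S setL by auto
    then obtain p where p: "p < length L" "L ! p = s" by (auto simp: in_set_conv_nth)
    have "f s \<le> w" using w sS f_def by simp
    have "p < k - 1"
    proof (rule ccontr)
      assume "\<not> p < k - 1"
      hence "k - 1 \<le> p" by simp
      hence "f (L ! (k-1)) \<le> f (L ! p)"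
        using sL p(1) sorted_nth_mono[of "map f L" "k-1" p] by simp
      thus False using big p(2) \<open>f s \<le> w\<close> by simp
    qed
    thus "s \<in> (\<lambda>p. L ! p) ` {..<k-1}" using p by auto
  qed
  hence "card S \<le> card ((\<lambda>p. L ! p) ` {..<k-1})" by (intro card_mono) auto
  also have "\<dots> \<le> k - 1" using card_image_le[of "{..<k-1}" "\<lambda>p. L ! p"] by simp
  finally show False using c k by simp
qed

definition Gx :: "(nat \<Rightarrow> real) \<Rightarrow> nat \<Rightarrow> nat \<Rightarrow> nat \<Rightarrow> real" where
  "Gx x n k i = Min ((\<lambda>S. Max ((\<lambda>j. \<bar>x j - x i\<bar>) ` S)) ` {S. S \<subseteq> {..<n} - {i} \<and> k \<le> card S})"

lemma Gx_coll:
  assumes "k < n"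
  shows "finite {S. S \<subseteq> {..<n} - {i} \<and> k \<le> card S}"
    and "({..<n} - {i}) \<in> {S. S \<subseteq> {..<n} - {i} \<and> k \<le> card S}"
proof -
  show "finite {S. S \<subseteq> {..<n} - {i} \<and> k \<le> card S}"
    by (rule finite_subset[of _ "Pow ({..<n} - {i})"]) auto
  have "card ({..<n} - {i}) \<ge> n - 1"
    by (cases "i < n") (auto simp: card_Diff_singleton_if)
  thus "({..<n} - {i}) \<in> {S. S \<subseteq> {..<n} - {i} \<and> k \<le> card S}" using assms by auto
qed


lemma Gx_ge:
  assumes k: "k \<ge> 1" "k < n"
  shows "\<bar>x (knn_index x n k i) - x i\<bar> \<le> Gx x n k i"
proof -
  let ?C = "{S. S \<subseteq> {..<n} - {i} \<and> k \<le> card S}"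
  let ?g = "\<lambda>S. Max ((\<lambda>j. \<bar>x j - x i\<bar>) ` S)"
  have "Gx x n k i \<in> ?g ` ?C" unfolding Gx_def
    using Gx_coll[OF k(2), of i] by (intro Min_in) auto
  then obtain S where S: "S \<in> ?C" "Gx x n k i = ?g S" by auto
  have fS: "finite S" using S(1) finite_subset[of S "{..<n}"] by auto
  have "S \<noteq> {}" using S(1) k by auto
  hence "\<forall>j\<in>S. \<bar>x j - x i\<bar> \<le> ?g S" using fS by auto
  thus ?thesis using knn_le[OF k(1), of S n i x] S by auto
qed

lemma Gx_le:
  assumes k: "k \<ge> 1" "k < n" and S: "S \<subseteq> {..<n} - {i}" "k \<le> card S"
    and w: "\<forall>j\<in>S. \<bar>x j - x i\<bar> \<le> w"
  shows "Gx x n k i \<le> w"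
proof -
  let ?C = "{S. S \<subseteq> {..<n} - {i} \<and> k \<le> card S}"
  let ?g = "\<lambda>S. Max ((\<lambda>j. \<bar>x j - x i\<bar>) ` S)"
  have "Gx x n k i \<le> ?g S" unfolding Gx_def
    using Gx_coll[OF k(2), of i] S by (intro Min_le) auto
  also have "?g S \<le> w"
  proof -
    have fS: "finite S" using S(1) finite_subset[of S "{..<n}"] by auto
    have "S \<noteq> {}" using S k by auto
    thus ?thesis using fS w by auto
  qed
  finally show ?thesis .
qed

lemma tele:
  fixes u :: "nat \<Rightarrow> real"
  assumes "mono u"
  shows "(\<Sum>j<n. u (j+k) - u j) \<le> real k * (u (n+k) - u 0)"
  using assms
proof (induction k arbitrary: u)
  case 0 then show ?case by simp
next
  case (Suc k)
  have m: "mono (\<lambda>m. u (Suc m))" using Suc.prems by (auto simp: mono_def)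
  have "(\<Sum>j<n. u (j + Suc k) - u j) = (\<Sum>j<n. u (Suc j + k) - u (Suc j)) + (\<Sum>j<n. u (Suc j) - u j)"
    by (simp add: sum.distrib[symmetric])
  also have "(\<Sum>j<n. u (Suc j) - u j) = u n - u 0" by (rule sum_lessThan_telescope)
  also have "(\<Sum>j<n. u (Suc j + k) - u (Suc j)) \<le> real k * (u (Suc (n+k)) - u (Suc 0))"
    using Suc.IH[OF m] by simp
  finally have "(\<Sum>j<n. u (j + Suc k) - u j) \<le> real k * (u (Suc (n+k)) - u (Suc 0)) + (u n - u 0)"
    by simp
  also have "\<dots> \<le> real (Suc k) * (u (n + Suc k) - u 0)"
  proof -
    have a: "u 0 \<le> u (Suc 0)" "u n \<le> u (n + Suc k)" "u (Suc 0) \<le> u (Suc (n+k))"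
      using Suc.prems by (auto simp: mono_def)
    have "real k * (u (Suc (n+k)) - u (Suc 0)) \<le> real k * (u (n + Suc k) - u 0)"
      using a by (intro mult_left_mono) auto
    thus ?thesis using a by (simp add: algebra_simps)
  qed
  finally show ?case .
qed

lemma Gx_sum:
  assumes k: "k \<ge> 1" "k < n" and R: "\<forall>j<n. \<bar>x j\<bar> \<le> R"
  shows "(\<Sum>i<n. Gx x n k i) \<le> 4 * real k * R"
proof -
  define ys where "ys = sort_key x [0..<n]"
  have len: "length ys = n" unfolding ys_def by simp
  have dys: "distinct ys" unfolding ys_def by (simp add: distinct_sort)
  have sys: "set ys = {..<n}" unfolding ys_def by auto
  have sorted: "sorted (map x ys)" unfolding ys_def by (simp add: sorted_sort_key)
  have ysn: "\<And>l. l < n \<Longrightarrow> ys ! l < n" using len sys nth_mem by blast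
  define z where "z m = x (ys ! min m (n-1))" for m
  have mz: "mono z" unfolding mono_def z_def
  proof (intro allI impI)
    fix a b :: nat assume "a \<le> b"
    thus "x (ys ! min a (n-1)) \<le> x (ys ! min b (n-1))"
      using sorted_nth_mono[OF sorted, of "min a (n-1)" "min b (n-1)"] len k by auto
  qed
  have zR: "\<bar>z m\<bar> \<le> R" for m unfolding z_def using R ysn k by auto
  have zl: "l < n \<Longrightarrow> z l = x (ys ! l)" for l unfolding z_def by auto
  have each: "Gx x n k (ys ! j) \<le> z (j+k) - z (j-k)" if j: "j < n" for j
  proof -
    define a where "a = j - k"
    define b where "b = min (j+k) (n-1)"
    define S where "S = (\<lambda>l. ys ! l) ` ({a..b} - {j})"
    have inj: "inj_on (\<lambda>l. ys ! l) {..<n}" using dys len by (simp add: inj_on_nth)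
    have bn: "b < n" unfolding b_def using k by auto
    have sub: "{a..b} - {j} \<subseteq> {..<n}" using bn by auto
    have "S \<subseteq> {..<n} - {ys ! j}"
    proof
      fix s assume "s \<in> S"
      then obtain l where l: "l \<in> {a..b} - {j}" "s = ys ! l" using \<open>s \<in> S\<close> unfolding S_def by blast
      have "ys ! l \<noteq> ys ! j" using l sub j dys len by (auto simp: nth_eq_iff_index_eq)
      thus "s \<in> {..<n} - {ys ! j}" using l sub ysn by auto
    qed
    moreover have "k \<le> card S"
    proof -
      have "card S = card ({a..b} - {j})" unfolding S_def
        using inj sub by (intro card_image) (rule inj_on_subset)
      also have "\<dots> = b + 1 - a - 1"
        using j bn unfolding a_def b_def by (auto simp: card_Diff_singleton_if)
      finally show ?thesis unfolding a_def b_def using k j by auto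
    qed
    moreover have "\<forall>s\<in>S. \<bar>x s - x (ys ! j)\<bar> \<le> z (j+k) - z (j-k)"
    proof
      fix s assume "s \<in> S"
      then obtain l where l: "l \<in> {a..b} - {j}" "s = ys ! l" using \<open>s \<in> S\<close> unfolding S_def by blast
      have "l < n" using l sub by auto
      have "z (j-k) \<le> z l" "z l \<le> z (j+k)" "z (j-k) \<le> z j" "z j \<le> z (j+k)"
        using l mz unfolding a_def b_def by (auto simp: mono_def)
      thus "\<bar>x s - x (ys ! j)\<bar> \<le> z (j+k) - z (j-k)"
        using zl[OF \<open>l < n\<close>] zl[OF j] l(2) by auto
    qed
    ultimately show ?thesis using Gx_le[OF k] by blast
  qed
  have "(\<Sum>i<n. Gx x n k i) = (\<Sum>j<n. Gx x n k (ys ! j))"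
  proof -
    have "(\<lambda>l. ys ! l) ` {..<n} = {..<n}" using sys len by (auto simp: set_conv_nth)
    moreover have "inj_on (\<lambda>l. ys ! l) {..<n}" using dys len by (simp add: inj_on_nth)
    ultimately show ?thesis using sum.reindex[of "\<lambda>l. ys ! l" "{..<n}" "Gx x n k"] by simp
  qed
  also have "\<dots> \<le> (\<Sum>j<n. z (j+k) - z (j-k))" by (intro sum_mono each) auto
  also have "\<dots> = (\<Sum>j<n. z (j+k) - z j) + (\<Sum>j<n. z (j + k - k) - z (j - k))"
    by (simp add: sum.distrib[symmetric])
  also have "\<dots> \<le> real k * (2*R) + real k * (2*R)"
  proof (rule add_mono)
    have "(\<Sum>j<n. z (j+k) - z j) \<le> real k * (z (n+k) - z 0)" by (rule tele[OF mz])
    also have "\<dots> \<le> real k * (2*R)" using zR[of "n+k"] zR[of 0] by (intro mult_left_mono) auto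
    finally show "(\<Sum>j<n. z (j+k) - z j) \<le> real k * (2*R)" .
    define u where "u m = z (m - k)" for m
    have mu: "mono u" using mz unfolding u_def by (auto simp: mono_def)
    have "(\<Sum>j<n. z (j + k - k) - z (j - k)) = (\<Sum>j<n. u (j+k) - u j)" unfolding u_def by simp
    also have "\<dots> \<le> real k * (u (n+k) - u 0)" by (rule tele[OF mu])
    also have "\<dots> \<le> real k * (2*R)" unfolding u_def
      using zR[of "n+k-k"] zR[of "0-k"] by (intro mult_left_mono) auto
    finally show "(\<Sum>j<n. z (j + k - k) - z (j - k)) \<le> real k * (2*R)" .
  qed
  finally show ?thesis by (simp add: algebra_simps)
qed



lemma Gx_nonneg: "k \<ge> 1 \<Longrightarrow> k < n \<Longrightarrow> 0 \<le> Gx x n k i"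
  using Gx_ge[of k n x i] by linarith

lemma Gx_meas:
  assumes sP: "sets P = sets borel" and i: "i < n"
  shows "(\<lambda>x. Gx x n k i) \<in> borel_measurable (PiM {..<n} (\<lambda>_. P))"
proof -
  have comp: "(\<lambda>x. x j) \<in> borel_measurable (PiM {..<n} (\<lambda>_. P))" if "j < n" for j
  proof -
    have "(\<lambda>x. x j) \<in> PiM {..<n} (\<lambda>_. P) \<rightarrow>\<^sub>M P" using that by (intro measurable_component_singleton) auto
    thus ?thesis using measurable_cong_sets[OF refl sP] by blast
  qed
  show ?thesis unfolding Gx_def
  proof (rule borel_measurable_Min)
    show "finite {S. S \<subseteq> {..<n} - {i} \<and> k \<le> card S}"
      by (rule finite_subset[of _ "Pow ({..<n} - {i})"]) auto
  next
    fix S assume S: "S \<in> {S. S \<subseteq> {..<n} - {i} \<and> k \<le> card S}"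
    show "(\<lambda>x. Max ((\<lambda>j. \<bar>x j - x i\<bar>) ` S)) \<in> borel_measurable (PiM {..<n} (\<lambda>_. P))"
    proof (rule borel_measurable_Max)
      show "finite S" using S finite_subset[of S "{..<n}"] by auto
    next
      fix j assume "j \<in> S"
      hence "j < n" using S by auto
      thus "(\<lambda>x. \<bar>x j - x i\<bar>) \<in> borel_measurable (PiM {..<n} (\<lambda>_. P))"
        using comp[of j] comp[OF i] by measurable
    qed
  qed
qed


lemma main_bound:
  assumes P: "prob_space P" and sP: "sets P = sets borel"
    and R: "AE y in P. \<bar>y\<bar> \<le> R" and R0: "0 \<le> R"
    and k: "k \<ge> 1" "k < n"
  shows "(\<integral>\<omega>. \<bar>smote_Z (fst \<omega>) n k (fst (snd \<omega>)) (snd (snd \<omega>)) - fst \<omega> (fst (snd \<omega>))\<bar>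
              \<partial>smote_space P n) \<le> 4 * real k * R / real n"
proof -
  define PX where "PX = PiM {..<n} (\<lambda>_. P)"
  define Q where "Q = measure_pmf (pmf_of_set {..<n::nat})"
  define U where "U = uniform_measure lborel {0..1::real}"
  have M: "smote_space P n = PX \<Otimes>\<^sub>M (Q \<Otimes>\<^sub>M U)" unfolding smote_space_def PX_def Q_def U_def ..
  have n0: "{..<n} \<noteq> {}" using k by auto
  have pPX: "prob_space PX" unfolding PX_def by (rule prob_space_PiM) (use P in auto)
  have pQ: "prob_space Q" unfolding Q_def by (rule prob_space_measure_pmf)
  have pU: "prob_space U" unfolding U_def by (rule prob_space_uniform_measure) auto
  have pQU: "prob_space (Q \<Otimes>\<^sub>M U)" by (rule prob_space_pair[OF pQ pU])
  have sQ: "sets Q = sets (count_space UNIV)" unfolding Q_def by simp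
  have sU: "sets U = sets borel" unfolding U_def by simp
  define F where "F \<omega> = \<bar>smote_Z (fst \<omega>) n k (fst (snd \<omega>)) (snd (snd \<omega>)) - fst \<omega> (fst (snd \<omega>))\<bar>" for \<omega>
  define H where "H \<omega> = (if fst (snd \<omega>) < n then ennreal (\<bar>snd (snd \<omega>)\<bar> * Gx (fst \<omega>) n k (fst (snd \<omega>))) else \<top>)"
    for \<omega> :: "(nat \<Rightarrow> real) \<times> nat \<times> real"
  have FH: "ennreal (F \<omega>) \<le> H \<omega>" for \<omega>
  proof (cases "fst (snd \<omega>) < n")
    case True
    obtain x i l where o: "\<omega> = (x, i, l)" by (cases \<omega>) auto
    have "F \<omega> = \<bar>l\<bar> * \<bar>x (knn_index x n k i) - x i\<bar>" unfolding F_def o smote_Z_def by (simp add: abs_mult)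
    also have "\<dots> \<le> \<bar>l\<bar> * Gx x n k i" by (intro mult_left_mono Gx_ge k) auto
    finally show ?thesis unfolding H_def o using True by (simp add: ennreal_leI)
  qed (simp add: H_def)
  have Hm: "H \<in> borel_measurable (PX \<Otimes>\<^sub>M (Q \<Otimes>\<^sub>M U))"
  proof -
    have g: "(\<lambda>\<omega>. fst (snd \<omega>)) \<in> (PX \<Otimes>\<^sub>M (Q \<Otimes>\<^sub>M U)) \<rightarrow>\<^sub>M count_space UNIV"
    proof -
      have "(\<lambda>\<omega>. fst (snd \<omega>)) \<in> (PX \<Otimes>\<^sub>M (Q \<Otimes>\<^sub>M U)) \<rightarrow>\<^sub>M Q" by measurable
      thus ?thesis using measurable_cong_sets[OF refl sQ] by blast
    qed
    have l: "(\<lambda>\<omega>. snd (snd \<omega>)) \<in> borel_measurable (PX \<Otimes>\<^sub>M (Q \<Otimes>\<^sub>M U))"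
    proof -
      have "(\<lambda>\<omega>. snd (snd \<omega>)) \<in> (PX \<Otimes>\<^sub>M (Q \<Otimes>\<^sub>M U)) \<rightarrow>\<^sub>M U" by measurable
      thus ?thesis using measurable_cong_sets[OF refl sU] by blast
    qed
    have f: "(\<lambda>\<omega>. if i < n then ennreal (\<bar>snd (snd \<omega>)\<bar> * Gx (fst \<omega>) n k i) else \<top>)
        \<in> borel_measurable (PX \<Otimes>\<^sub>M (Q \<Otimes>\<^sub>M U))" for i
    proof (cases "i < n")
      case True
      have "(\<lambda>x. Gx x n k i) \<in> borel_measurable PX" unfolding PX_def by (rule Gx_meas[OF sP True])
      hence "(\<lambda>\<omega>. Gx (fst \<omega>) n k i) \<in> borel_measurable (PX \<Otimes>\<^sub>M (Q \<Otimes>\<^sub>M U))"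
        by (rule measurable_compose[OF measurable_fst])
      with l True show ?thesis by simp
    qed simp
    show ?thesis unfolding H_def
      by (rule measurable_compose_countable[where f = "\<lambda>i \<omega>. if i < n then ennreal (\<bar>snd (snd \<omega>)\<bar> * Gx (fst \<omega>) n k i) else \<top>", OF f g])
  qed
  have inner: "(\<integral>\<^sup>+ y. H (x, y) \<partial>(Q \<Otimes>\<^sub>M U)) \<le> ennreal ((\<Sum>i<n. Gx x n k i) / real n)"
    if x: "x \<in> space PX" for x
  proof -
    have Hx: "(\<lambda>y. H (x, y)) \<in> borel_measurable (Q \<Otimes>\<^sub>M U)"
      using measurable_Pair2[OF Hm x] by simp
    have "(\<integral>\<^sup>+ y. H (x, y) \<partial>(Q \<Otimes>\<^sub>M U)) = (\<integral>\<^sup>+ i. \<integral>\<^sup>+ l. H (x, (i, l)) \<partial>U \<partial>Q)"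
      using sigma_finite_measure.nn_integral_fst[OF prob_space_imp_sigma_finite[OF pU] Hx] by simp
    also have "\<dots> \<le> (\<integral>\<^sup>+ i. (if i < n then ennreal (Gx x n k i) else \<top>) \<partial>Q)"
    proof (rule nn_integral_mono)
      fix i
      show "(\<integral>\<^sup>+ l. H (x, (i, l)) \<partial>U) \<le> (if i < n then ennreal (Gx x n k i) else \<top>)"
      proof (cases "i < n")
        case True
        have "(\<integral>\<^sup>+ l. H (x, (i, l)) \<partial>U) \<le> (\<integral>\<^sup>+ l. ennreal (Gx x n k i) \<partial>U)"
        proof (rule nn_integral_mono_AE)
          have "AE l in U. l \<in> {0..1}" unfolding U_def by (rule AE_uniform_measureI) auto
          thus "AE l in U. H (x, (i, l)) \<le> ennreal (Gx x n k i)"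
          proof eventually_elim
            case (elim l)
            have "\<bar>l\<bar> * Gx x n k i \<le> 1 * Gx x n k i"
              using elim Gx_nonneg[OF k] by (intro mult_right_mono) auto
            thus ?case unfolding H_def using True by (simp add: ennreal_leI)
          qed
        qed
        also have "\<dots> = ennreal (Gx x n k i)"
          using prob_space.emeasure_space_1[OF pU] by simp
        finally show ?thesis using True by simp
      qed simp
    qed
    also have "\<dots> = (\<Sum>i<n. (if i < n then ennreal (Gx x n k i) else \<top>)) / (of_nat n :: ennreal)"
      unfolding Q_def using n0 by (subst nn_integral_pmf_of_set) auto
    also have "\<dots> = ennreal ((\<Sum>i<n. Gx x n k i) / real n)"
    proof -
      have "(\<Sum>i<n. (if i < n then ennreal (Gx x n k i) else \<top>)) = ennreal (\<Sum>i<n. Gx x n k i)"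
        using Gx_nonneg[OF k] by (simp add: sum_ennreal)
      moreover have "(of_nat n :: ennreal) = ennreal (real n)" by (simp add: ennreal_of_nat_eq_real_of_nat)
      ultimately show ?thesis
        using Gx_nonneg[OF k] k by (simp add: divide_ennreal sum_nonneg)
    qed
    finally show ?thesis .
  qed
  have AEx: "AE x in PX. (\<Sum>i<n. Gx x n k i) \<le> 4 * real k * R"
  proof -
    have "AE x in PX. \<forall>j\<in>{..<n}. \<bar>x j\<bar> \<le> R"
      unfolding PX_def
      by (intro eventually_ball_finite ballI AE_PiM_component P R) auto
    thus ?thesis by eventually_elim (intro Gx_sum k, auto)
  qed
  have "(\<integral>\<^sup>+ \<omega>. ennreal (F \<omega>) \<partial>(PX \<Otimes>\<^sub>M (Q \<Otimes>\<^sub>M U))) \<le> (\<integral>\<^sup>+ \<omega>. H \<omega> \<partial>(PX \<Otimes>\<^sub>M (Q \<Otimes>\<^sub>M U)))"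
    by (intro nn_integral_mono FH)
  also have "\<dots> = (\<integral>\<^sup>+ x. \<integral>\<^sup>+ y. H (x, y) \<partial>(Q \<Otimes>\<^sub>M U) \<partial>PX)"
    using sigma_finite_measure.nn_integral_fst[OF prob_space_imp_sigma_finite[OF pQU] Hm] by simp
  also have "\<dots> \<le> (\<integral>\<^sup>+ x. ennreal (4 * real k * R / real n) \<partial>PX)"
  proof (rule nn_integral_mono_AE)
    show "AE x in PX. (\<integral>\<^sup>+ y. H (x, y) \<partial>(Q \<Otimes>\<^sub>M U)) \<le> ennreal (4 * real k * R / real n)"
      using AEx AE_space
    proof eventually_elim
      case (elim x)
      have "(\<Sum>i<n. Gx x n k i) / real n \<le> 4 * real k * R / real n"
        using elim(1) by (intro divide_right_mono) auto
      hence "ennreal ((\<Sum>i<n. Gx x n k i) / real n) \<le> ennreal (4 * real k * R / real n)"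
        by (rule ennreal_leI)
      with inner[OF elim(2)] show ?case by (rule order_trans)
    qed
  qed
  also have "\<dots> = ennreal (4 * real k * R / real n)"
    using prob_space.emeasure_space_1[OF pPX] by simp
  finally have "integral\<^sup>N (smote_space P n) (\<lambda>\<omega>. ennreal (F \<omega>)) \<le> ennreal (4 * real k * R / real n)"
    unfolding M .
  thus ?thesis unfolding F_def using R0 by (intro integral_real_bounded) auto
qed


theorem theorem3:
  fixes P :: "real measure" and k :: nat
  assumes "prob_space P"
    and "sets P = sets borel"
    and "\<forall>x. measure P {x} = 0"
    and "\<exists>K. compact K \<and> emeasure P K = 1"
    and "k \<ge> 1"
  shows "(\<lambda>n. \<integral>\<omega>. \<bar>smote_Z (fst \<omega>) n k (fst (snd \<omega>)) (snd (snd \<omega>)) - fst \<omega> (fst (snd \<omega>))\<bar>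
              \<partial>smote_space P n) \<longlonglongrightarrow> 0"
proof -
  obtain K where K: "compact K" "emeasure P K = 1" using assms(4) by blast
  obtain R0 where R0: "\<forall>y\<in>K. \<bar>y\<bar> \<le> R0" using compact_imp_bounded[OF K(1)] bounded_real by blast
  define R where "R = max R0 0"
  have Rge: "0 \<le> R" unfolding R_def by simp
  have Kev: "K \<in> sets P" using assms(2) compact_imp_closed[OF K(1)] by simp
  have "AE y in P. y \<in> K"
    using prob_space.AE_in_set_eq_1[OF assms(1) Kev] K(2) by (simp add: measure_def)
  hence R: "AE y in P. \<bar>y\<bar> \<le> R" by eventually_elim (use R0 R_def in force)
  define a where "a n = (\<integral>\<omega>. \<bar>smote_Z (fst \<omega>) n k (fst (snd \<omega>)) (snd (snd \<omega>)) - fst \<omega> (fst (snd \<omega>))\<bar>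
              \<partial>smote_space P n)" for n
  have lo: "0 \<le> a n" for n unfolding a_def by (rule Bochner_Integration.integral_nonneg) auto
  have hi: "eventually (\<lambda>n. a n \<le> 4 * real k * R / real n) sequentially"
    using eventually_gt_at_top[of k]
    by eventually_elim (unfold a_def, rule main_bound[OF assms(1,2) R Rge assms(5)])
  have "(\<lambda>n. 4 * real k * R / real n) \<longlonglongrightarrow> 0" by (rule lim_const_over_n)
  hence "a \<longlonglongrightarrow> 0"
    by (rule tendsto_sandwich[OF always_eventually[OF allI[OF lo]] hi tendsto_const])
  thus ?thesis unfolding a_def .
qed

end
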